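(* Let $A\subseteq\omega$ be a c.e. set and $\epsilon$ a positive real number. Then $A$ has a computable subset $B$ such that $\underline{\rho}(B)>\underline{\rho}(A)-\epsilon$.
   Context: For $S\subseteq\omega$ and $n>0$, $\rho_n(S)=|S\cap[0,n)|/n$, and the lower density is $\underline{\rho}(S)=\liminf_n\rho_n(S)$. *)

theory Defs
  imports "HOL-Library.Extended_Real" "HOL-Library.Liminf_Limsup"
begin

datatype recf =
    Zero
  | Succ
  | Proj nat
  | Comp recf "recf list"
  | Prim recf recf
  | Mini recf

inductive rec_eval :: "recf \<Rightarrow> nat list \<Rightarrow> nat \<Rightarrow> bool" where
  eval_Zero: "rec_eval Zero xs 0"
| eval_Succ: "rec_eval Succ (x # xs) (Suc x)"
| eval_Proj: "i < length xs \<Longrightarrow> rec_eval (Proj i) xs (xs ! i)"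
| eval_Comp: "list_all2 (\<lambda>g r. rec_eval g xs r) gs ys \<Longrightarrow> rec_eval f ys y
              \<Longrightarrow> rec_eval (Comp f gs) xs y"
| eval_Prim0: "rec_eval f xs y \<Longrightarrow> rec_eval (Prim f g) (0 # xs) y"
| eval_PrimS: "rec_eval (Prim f g) (n # xs) r \<Longrightarrow> rec_eval g (n # r # xs) y
              \<Longrightarrow> rec_eval (Prim f g) (Suc n # xs) y"
| eval_Mini: "rec_eval f (n # xs) 0 \<Longrightarrow> (\<forall>m<n. \<exists>v. v > 0 \<and> rec_eval f (m # xs) v)
              \<Longrightarrow> rec_eval (Mini f) xs n"

definition computable_set :: "nat set \<Rightarrow> bool" where
  "computable_set B \<longleftrightarrow> (\<exists>f. \<forall>n. rec_eval f [n] (if n \<in> B then 1 else 0))"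

definition ce_set :: "nat set \<Rightarrow> bool" where
  "ce_set A \<longleftrightarrow> (\<exists>f. \<forall>n. n \<in> A \<longleftrightarrow> (\<exists>y. rec_eval f [n] y))"

definition rho :: "nat \<Rightarrow> nat set \<Rightarrow> real" where
  "rho n S = real (card (S \<inter> {0..<n})) / real n"

definition lower_density :: "nat set \<Rightarrow> ereal" where
  "lower_density S = liminf (\<lambda>n. ereal (rho (Suc n) S))"

end

theory Submission
  imports Defs
begin


fun prim_cl :: "nat option \<Rightarrow> (nat \<Rightarrow> nat \<Rightarrow> nat option) \<Rightarrow> nat \<Rightarrow> nat option" where
  "prim_cl a h 0 = a"
| "prim_cl a h (Suc m) = (case prim_cl a h m of None \<Rightarrow> None | Some r \<Rightarrow> h m r)"

definition minP :: "(nat \<Rightarrow> nat option) \<Rightarrow> nat \<Rightarrow> bool" where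
  "minP h n \<longleftrightarrow> h n = Some 0 \<and> (\<forall>m<n. \<exists>v. h m = Some (Suc v))"

fun clocked :: "recf \<Rightarrow> nat \<Rightarrow> nat list \<Rightarrow> nat option" where
  "clocked Zero t xs = Some 0"
| "clocked Succ t xs = (case xs of [] \<Rightarrow> None | x#_ \<Rightarrow> Some (Suc x))"
| "clocked (Proj i) t xs = (if i < length xs then Some (xs!i) else None)"
| "clocked (Comp f gs) t xs = (let rs = map (\<lambda>g. clocked g t xs) gs in
     if None \<in> set rs then None else clocked f t (map the rs))"
| "clocked (Prim f g) t xs = (case xs of [] \<Rightarrow> None
     | n#ys \<Rightarrow> prim_cl (clocked f t ys) (\<lambda>m r. clocked g t (m#r#ys)) n)"
| "clocked (Mini f) t xs = (if \<exists>n\<le>t. minP (\<lambda>m. clocked f t (m#xs)) n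
     then Some (LEAST n. minP (\<lambda>m. clocked f t (m#xs)) n) else None)"

lemma minP_unique: "minP h n \<Longrightarrow> minP h n' \<Longrightarrow> n = n'"
  unfolding minP_def by (metis linorder_neqE_nat option.inject nat.distinct(1))

lemma minP_Least: "minP h n \<Longrightarrow> (LEAST n. minP h n) = n"
  by (metis LeastI minP_unique)

lemma prim_cl_mono:
  assumes "prim_cl a h n = Some y" "\<And>v. a = Some v \<Longrightarrow> a' = Some v"
    "\<And>m r v. h m r = Some v \<Longrightarrow> h' m r = Some v"
  shows "prim_cl a' h' n = Some y"
  using assms(1)
proof (induction n arbitrary: y)
  case 0 then show ?case using assms(2) by simp
next
  case (Suc n)
  then obtain r where r: "prim_cl a h n = Some r" by (cases "prim_cl a h n") auto
  with Suc show ?case using assms(3) by simp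
qed

lemma clocked_mono: "clocked f t xs = Some y \<Longrightarrow> t \<le> t' \<Longrightarrow> clocked f t' xs = Some y"
proof (induction f arbitrary: xs y)
  case Zero then show ?case by simp
next
  case Succ then show ?case by simp
next
  case (Proj i) then show ?case by simp
next
  case (Comp f gs)
  let ?rs = "map (\<lambda>g. clocked g t xs) gs"
  have nn: "None \<notin> set ?rs" using Comp.prems by (auto simp: Let_def split: if_splits)
  have eq: "map (\<lambda>g. clocked g t' xs) gs = ?rs"
  proof (rule map_cong[OF refl])
    fix g assume g: "g \<in> set gs"
    then obtain v where "clocked g t xs = Some v" using nn by (cases "clocked g t xs") force+
    then show "clocked g t' xs = clocked g t xs" using Comp.IH(2)[OF g] Comp.prems(2) by simp
  qed
  have "clocked f t (map the ?rs) = Some y" using Comp.prems nn by (simp add: Let_def)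
  then have "clocked f t' (map the ?rs) = Some y" using Comp.IH(1) Comp.prems(2) by blast
  then show ?case using nn eq by (simp only: clocked.simps Let_def eq if_False)
next
  case (Prim f g)
  then obtain n ys where xs: "xs = n # ys" by (cases xs) auto
  show ?case using Prim.prems xs
    by (auto intro!: prim_cl_mono[where a="clocked f t ys" and h="\<lambda>m r. clocked g t (m#r#ys)"]
        Prim.IH)
next
  case (Mini f)
  let ?h = "\<lambda>m. clocked f t (m#xs)" and ?h' = "\<lambda>m. clocked f t' (m#xs)"
  obtain n where n: "n \<le> t" "minP ?h n" and y: "y = n"
    using Mini.prems by (auto split: if_splits simp: minP_Least)
  have "minP ?h' n" using n(2) Mini.IH Mini.prems(2) unfolding minP_def by blast
  then show ?case using n y Mini.prems(2) by (auto simp: minP_Least intro!: exI[of _ n])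
qed

lemma prim_cl_sound:
  assumes "prim_cl (clocked f t ys) (\<lambda>m r. clocked g t (m#r#ys)) n = Some y"
    and "\<And>y. clocked f t ys = Some y \<Longrightarrow> rec_eval f ys y"
    and "\<And>zs y. clocked g t zs = Some y \<Longrightarrow> rec_eval g zs y"
  shows "rec_eval (Prim f g) (n#ys) y"
  using assms(1)
proof (induction n arbitrary: y)
  case 0 then show ?case using assms(2) by (auto intro: eval_Prim0)
next
  case (Suc n)
  then obtain r where r: "prim_cl (clocked f t ys) (\<lambda>m r. clocked g t (m#r#ys)) n = Some r"
    by (cases "prim_cl (clocked f t ys) (\<lambda>m r. clocked g t (m#r#ys)) n") auto
  with Suc show ?case using assms(3) by (auto intro: eval_PrimS)
qed

lemma clocked_sound: "clocked f t xs = Some y \<Longrightarrow> rec_eval f xs y"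
proof (induction f arbitrary: xs y)
  case Zero then show ?case by (auto intro: eval_Zero)
next
  case Succ then show ?case by (auto split: list.splits intro: eval_Succ)
next
  case (Proj i) then show ?case by (auto split: if_splits intro: eval_Proj)
next
  case (Comp f gs)
  let ?rs = "map (\<lambda>g. clocked g t xs) gs"
  have nn: "None \<notin> set ?rs" using Comp.prems by (auto simp: Let_def split: if_splits)
  have fy: "clocked f t (map the ?rs) = Some y" using Comp.prems nn by (simp add: Let_def)
  have "list_all2 (\<lambda>g r. rec_eval g xs r) gs (map the ?rs)"
    unfolding list_all2_map2 list_all2_same
  proof
    fix g assume g: "g \<in> set gs"
    then obtain v where "clocked g t xs = Some v" using nn by (cases "clocked g t xs") force+
    then show "rec_eval g xs (the (clocked g t xs))" using Comp.IH(2)[OF g] by simp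
  qed
  then show ?case using Comp.IH(1)[OF fy] by (auto intro: eval_Comp)
next
  case (Prim f g)
  then obtain n ys where xs: "xs = n # ys" by (cases xs) auto
  show ?case using Prim xs by (auto intro!: prim_cl_sound)
next
  case (Mini f)
  let ?h = "\<lambda>m. clocked f t (m#xs)"
  obtain n where n: "n \<le> t" "minP ?h n" and y: "y = n"
    using Mini.prems by (auto split: if_splits simp: minP_Least)
  have n0: "clocked f t (n#xs) = Some 0" and lt: "\<forall>m<n. \<exists>v. clocked f t (m#xs) = Some (Suc v)"
    using n(2) unfolding minP_def by auto
  have "\<forall>m<n. \<exists>v. v > 0 \<and> rec_eval f (m#xs) v"
  proof (intro allI impI)
    fix m assume "m < n"
    then obtain v where "clocked f t (m#xs) = Some (Suc v)" using lt by blast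
    then show "\<exists>v. v > 0 \<and> rec_eval f (m#xs) v" using Mini.IH by blast
  qed
  then show ?case unfolding y using n0 Mini.IH by (intro eval_Mini) auto
qed

lemma common_time_list:
  fixes gs :: "recf list" and xs ys :: "nat list"
  shows "list_all2 (\<lambda>g r. \<exists>t. clocked g t xs = Some r) gs ys \<Longrightarrow>
   \<exists>T. \<forall>t\<ge>T. map (\<lambda>g. clocked g t xs) gs = map Some ys"
proof (induction rule: list_all2_induct)
  case Nil then show ?case by simp
next
  case (Cons g gs r ys)
  then obtain t1 T where "clocked g t1 xs = Some r" "\<forall>t\<ge>T. map (\<lambda>g. clocked g t xs) gs = map Some ys"
    by blast
  then show ?case by (intro exI[of _ "max t1 T"]) (auto intro: clocked_mono)
qed

lemma common_time_nat:
  assumes "\<forall>m<n. \<exists>t. clocked f t (m#xs) = Some (h m)"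
  shows "\<exists>T. \<forall>t\<ge>T. \<forall>m<n. clocked f t (m#xs) = Some (h m)"
  using assms
proof (induction n)
  case 0 then show ?case by simp
next
  case (Suc n)
  then obtain T t1 where "\<forall>t\<ge>T. \<forall>m<n. clocked f t (m#xs) = Some (h m)" "clocked f t1 (n#xs) = Some (h n)"
    by (meson less_Suc_eq)
  then show ?case by (intro exI[of _ "max t1 T"]) (auto simp: less_Suc_eq intro: clocked_mono)
qed

lemma clocked_complete: "rec_eval f xs y \<Longrightarrow> \<exists>t. clocked f t xs = Some y"
proof (induction rule: rec_eval.induct)
  case (eval_Zero xs) then show ?case by simp
next
  case (eval_Succ x xs) then show ?case by simp
next
  case (eval_Proj i xs) then show ?case by simp
next
  case (eval_Comp xs gs ys f y)
  have "list_all2 (\<lambda>g r. \<exists>t. clocked g t xs = Some r) gs ys"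
    using eval_Comp(1) by (rule list_all2_mono) blast
  then obtain T where T: "\<forall>t\<ge>T. map (\<lambda>g. clocked g t xs) gs = map Some ys"
    using common_time_list by blast
  obtain t1 where t1: "clocked f t1 ys = Some y" using eval_Comp by blast
  have e: "map (\<lambda>g. clocked g (max T t1) xs) gs = map Some ys" using T by simp
  have "clocked f (max T t1) ys = Some y" by (rule clocked_mono[OF t1]) simp
  then have "clocked (Comp f gs) (max T t1) xs = Some y"
    by (simp only: clocked.simps Let_def e) (simp add: o_def)
  then show ?case by blast
next
  case (eval_Prim0 f xs y g) then show ?case by auto
next
  case (eval_PrimS f g n xs r y)
  then obtain t1 t2 where a: "clocked (Prim f g) t1 (n#xs) = Some r" and b: "clocked g t2 (n#r#xs) = Some y"
    by blast
  have "clocked (Prim f g) (max t1 t2) (n#xs) = Some r" by (rule clocked_mono[OF a]) simp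
  moreover have "clocked g (max t1 t2) (n#r#xs) = Some y" by (rule clocked_mono[OF b]) simp
  ultimately show ?case by (intro exI[of _ "max t1 t2"]) auto
next
  case (eval_Mini f n xs)
  define h where "h m = (SOME v. v > 0 \<and> rec_eval f (m#xs) v \<and> (\<exists>t. clocked f t (m#xs) = Some v))" for m
  have h: "\<forall>m<n. h m > 0 \<and> (\<exists>t. clocked f t (m#xs) = Some (h m))"
  proof (intro allI impI)
    fix m assume "m < n"
    then have "\<exists>v. v > 0 \<and> rec_eval f (m#xs) v \<and> (\<exists>t. clocked f t (m#xs) = Some v)"
      using eval_Mini(3) by blast
    then show "h m > 0 \<and> (\<exists>t. clocked f t (m#xs) = Some (h m))"
      unfolding h_def by (rule someI2_ex) blast
  qed
  then obtain T where T: "\<forall>t\<ge>T. \<forall>m<n. clocked f t (m#xs) = Some (h m)"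
    using common_time_nat[of n f xs h] by blast
  obtain t1 where t1: "clocked f t1 (n#xs) = Some 0" using eval_Mini(2) by blast
  define t where "t = max n (max T t1)"
  have mp: "minP (\<lambda>m. clocked f t (m#xs)) n"
    unfolding minP_def
  proof
    show "clocked f t (n#xs) = Some 0" by (rule clocked_mono[OF t1]) (simp add: t_def)
    show "\<forall>m<n. \<exists>v. clocked f t (m#xs) = Some (Suc v)"
    proof (intro allI impI)
      fix m assume m: "m < n"
      have "t \<ge> T" using t_def by simp
      then have "clocked f t (m#xs) = Some (h m)" using T m by blast
      moreover have "h m > 0" using h m by blast
      ultimately show "\<exists>v. clocked f t (m#xs) = Some (Suc v)" by (cases "h m") auto
    qed
  qed
  have "n \<le> t" using t_def by simp
  then have ex: "\<exists>n'\<le>t. minP (\<lambda>m. clocked f t (m#xs)) n'" using mp by blast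
  have "clocked (Mini f) t xs = Some n"
    by (simp only: clocked.simps if_P[OF ex] minP_Least[OF mp])
  then show ?case by blast
qed

lemma clocked_iff: "rec_eval f xs y \<longleftrightarrow> (\<exists>t. clocked f t xs = Some y)"
  using clocked_sound clocked_complete by blast



fun cn :: "nat \<Rightarrow> recf" where
  "cn 0 = Zero" | "cn (Suc k) = Comp Succ [cn k]"

lemma ev_cn: "rec_eval (cn k) xs k"
  by (induction k) (auto intro!: eval_Zero eval_Comp eval_Succ)

lemma comp1: "rec_eval g xs a \<Longrightarrow> rec_eval f [a] y \<Longrightarrow> rec_eval (Comp f [g]) xs y"
  by (rule eval_Comp[where ys="[a]"]) auto
lemma comp2: "rec_eval g1 xs a \<Longrightarrow> rec_eval g2 xs b \<Longrightarrow> rec_eval f [a,b] y \<Longrightarrow> rec_eval (Comp f [g1,g2]) xs y"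
  by (rule eval_Comp[where ys="[a,b]"]) auto

lemma ev_Proj_nth: "i < length xs \<Longrightarrow> xs ! i = v \<Longrightarrow> rec_eval (Proj i) xs v"
  using eval_Proj by blast

definition "SUC g = Comp Succ [g]"
lemma ev_SUC: "rec_eval g xs a \<Longrightarrow> rec_eval (SUC g) xs (Suc a)"
  unfolding SUC_def by (rule comp1) (auto intro: eval_Succ)

definition "pred_r = Prim Zero (Proj 0)"
lemma ev_pred_r: "rec_eval pred_r (x#xs) (x - 1)"
proof (induction x)
  case 0 then show ?case unfolding pred_r_def by (auto intro: eval_Prim0 eval_Zero)
next
  case (Suc x) then show ?case unfolding pred_r_def
    by (auto intro!: eval_PrimS[where r="x - 1"] ev_Proj_nth)
qed

definition "add_r = Prim (Proj 0) (Comp Succ [Proj 1])"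
lemma ev_add_r: "rec_eval add_r (x#y#xs) (x + y)"
proof (induction x)
  case 0 then show ?case unfolding add_r_def using eval_Prim0 eval_Proj[of 0 "y#xs"] by auto
next
  case (Suc x)
  have "rec_eval (Comp Succ [Proj 1]) (x # (x+y) # y # xs) (Suc (x+y))"
    by (rule comp1[where a="x+y"]) (auto intro: eval_Succ eval_Proj[of 1 "x # (x+y) # y # xs", simplified])
  then show ?case using Suc unfolding add_r_def by (auto intro: eval_PrimS)
qed

definition "mult_r = Prim Zero (Comp add_r [Proj 1, Proj 2])"
lemma ev_mult_r: "rec_eval mult_r (x#y#xs) (x * y)"
proof (induction x)
  case 0 then show ?case unfolding mult_r_def by (auto intro: eval_Prim0 eval_Zero)
next
  case (Suc x)
  have "rec_eval (Comp add_r [Proj 1, Proj 2]) (x # (x*y) # y # xs) (x*y + y)"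
    by (rule comp2[where a="x*y" and b=y]) (auto intro: ev_add_r eval_Proj[of 1 "x # (x*y) # y # xs", simplified]
         eval_Proj[of 2 "x # (x*y) # y # xs", simplified])
  then show ?case using Suc unfolding mult_r_def by (auto intro: eval_PrimS simp: add.commute)
qed

definition "sg_r = Prim Zero (cn 1)"
lemma ev_sg_r: "rec_eval sg_r (x#xs) (if x = 0 then 0 else 1)"
proof (induction x)
  case 0 then show ?case unfolding sg_r_def by (auto intro: eval_Prim0 eval_Zero)
next
  case (Suc x) then show ?case unfolding sg_r_def
    by (auto intro!: eval_PrimS[where r="if x = 0 then 0 else 1"] ev_cn[of 1, simplified])
qed

definition "nsg_r = Prim (cn 1) Zero"
lemma ev_nsg_r: "rec_eval nsg_r (x#xs) (if x = 0 then 1 else 0)"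
proof (induction x)
  case 0 then show ?case unfolding nsg_r_def by (auto intro: eval_Prim0 ev_cn[of 1, simplified])
next
  case (Suc x) then show ?case unfolding nsg_r_def
    by (auto intro!: eval_PrimS[where r="if x = 0 then 1 else 0"] eval_Zero)
qed

definition "PRED g = Comp pred_r [g]"
definition "ADD g h = Comp add_r [g, h]"
definition "MUL g h = Comp mult_r [g, h]"
definition "SG g = Comp sg_r [g]"
definition "NSG g = Comp nsg_r [g]"

lemma ev_PRED: "rec_eval g xs a \<Longrightarrow> rec_eval (PRED g) xs (a - 1)"
  unfolding PRED_def by (rule comp1[where a=a], assumption, rule ev_pred_r)
lemma ev_SG: "rec_eval g xs a \<Longrightarrow> rec_eval (SG g) xs (if a = 0 then 0 else 1)"
  unfolding SG_def by (rule comp1[where a=a], assumption, rule ev_sg_r)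
lemma ev_NSG: "rec_eval g xs a \<Longrightarrow> rec_eval (NSG g) xs (if a = 0 then 1 else 0)"
  unfolding NSG_def by (rule comp1[where a=a], assumption, rule ev_nsg_r)
lemma ev_ADD: "rec_eval g xs a \<Longrightarrow> rec_eval h xs b \<Longrightarrow> rec_eval (ADD g h) xs (a + b)"
  unfolding ADD_def by (rule comp2[where a=a and b=b]) (auto intro: ev_add_r)
lemma ev_MUL: "rec_eval g xs a \<Longrightarrow> rec_eval h xs b \<Longrightarrow> rec_eval (MUL g h) xs (a * b)"
  unfolding MUL_def by (rule comp2[where a=a and b=b]) (auto intro: ev_mult_r)

definition projsFrom :: "nat \<Rightarrow> nat \<Rightarrow> recf list" where
  "projsFrom s k = map Proj [s..<s+k]"

lemma ev_projsFrom:
  assumes "length xs = k" "length pre = s"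
  shows "list_all2 (\<lambda>g v. rec_eval g (pre @ xs) v) (projsFrom s k) xs"
  unfolding projsFrom_def list_all2_conv_all_nth
proof (intro conjI allI impI)
  show "length (map Proj [s..<s + k]) = length xs" using assms by simp
  fix i assume "i < length (map Proj [s..<s + k])"
  then have i: "i < k" by simp
  have "rec_eval (Proj (s+i)) (pre @ xs) ((pre @ xs) ! (s+i))"
    by (rule eval_Proj) (use assms i in simp)
  then show "rec_eval (map Proj [s..<s + k] ! i) (pre @ xs) (xs ! i)"
    using assms i by (simp add: nth_append)
qed


definition bsum :: "nat \<Rightarrow> recf \<Rightarrow> recf" where
  "bsum k h = Prim Zero (ADD (Comp h (Proj 0 # projsFrom 2 k)) (Proj 1))"

definition bprod :: "nat \<Rightarrow> recf \<Rightarrow> recf" where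
  "bprod k h = Prim (cn 1) (MUL (Comp h (Proj 0 # projsFrom 2 k)) (Proj 1))"

lemma ev_drop2:
  assumes "rec_eval h (j#xs) v" "length xs = k"
  shows "rec_eval (Comp h (Proj 0 # projsFrom 2 k)) (j#r#xs) v"
proof (rule eval_Comp[where ys="j#xs"])
  have "list_all2 (\<lambda>g v. rec_eval g ([j,r] @ xs) v) (projsFrom 2 k) xs"
    by (rule ev_projsFrom) (use assms in auto)
  then show "list_all2 (\<lambda>g r'. rec_eval g (j # r # xs) r') (Proj 0 # projsFrom 2 k) (j # xs)"
    by (auto intro: ev_Proj_nth)
qed (rule assms(1))

lemma ev_bsum:
  assumes "\<And>j. rec_eval h (j#xs) (H j)" "length xs = k"
  shows "rec_eval (bsum k h) (n#xs) (\<Sum>j<n. H j)"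
proof (induction n)
  case 0 then show ?case unfolding bsum_def by (auto intro: eval_Prim0 eval_Zero)
next
  case (Suc n)
  have "rec_eval (ADD (Comp h (Proj 0 # projsFrom 2 k)) (Proj 1)) (n # (\<Sum>j<n. H j) # xs) (H n + (\<Sum>j<n. H j))"
    by (rule ev_ADD) (auto intro: ev_drop2 assms ev_Proj_nth)
  then show ?case using Suc unfolding bsum_def by (auto intro: eval_PrimS simp: add.commute)
qed

lemma ev_bprod:
  assumes "\<And>j. rec_eval h (j#xs) (H j)" "length xs = k"
  shows "rec_eval (bprod k h) (n#xs) (\<Prod>j<n. H j)"
proof (induction n)
  case 0 then show ?case unfolding bprod_def by (auto intro: eval_Prim0 ev_cn[of 1, simplified])
next
  case (Suc n)
  have "rec_eval (MUL (Comp h (Proj 0 # projsFrom 2 k)) (Proj 1)) (n # (\<Prod>j<n. H j) # xs) (H n * (\<Prod>j<n. H j))"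
    by (rule ev_MUL) (auto intro: ev_drop2 assms ev_Proj_nth)
  then show ?case using Suc unfolding bprod_def by (auto intro: eval_PrimS simp: mult.commute)
qed

fun prodl :: "recf list \<Rightarrow> recf" where
  "prodl [] = cn 1" | "prodl (g#gs) = MUL g (prodl gs)"

lemma ev_prodl: "list_all2 (\<lambda>g v. rec_eval g xs v) gs vs \<Longrightarrow> rec_eval (prodl gs) xs (prod_list vs)"
  by (induction rule: list_all2_induct) (auto intro: ev_MUL ev_cn[of 1, simplified])

definition "sub_r = Prim (Proj 0) (Comp pred_r [Proj 1])"
lemma ev_sub_r: "rec_eval sub_r (y#x#xs) (x - y)"
proof (induction y)
  case 0 then show ?case unfolding sub_r_def by (auto intro!: eval_Prim0 ev_Proj_nth)
next
  case (Suc y)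
  have "rec_eval (Comp pred_r [Proj 1]) (y # (x - y) # x # xs) (x - y - 1)"
    by (rule comp1[where a="x - y"], rule ev_Proj_nth, simp, simp, rule ev_pred_r)
  then show ?case using Suc unfolding sub_r_def by (auto intro: eval_PrimS)
qed

definition "SUB g h = Comp sub_r [h, g]"
lemma ev_SUB: "rec_eval g xs a \<Longrightarrow> rec_eval h xs b \<Longrightarrow> rec_eval (SUB g h) xs (a - b)"
  unfolding SUB_def by (rule comp2[where a=b and b=a]) (auto intro: ev_sub_r)



definition enc :: "nat option \<Rightarrow> nat" where
  "enc x = (case x of None \<Rightarrow> 0 | Some y \<Rightarrow> Suc y)"

lemma enc_simps[simp]: "enc None = 0" "enc (Some y) = Suc y"
  by (simp_all add: enc_def)

lemma enc_0_iff: "enc x = 0 \<longleftrightarrow> x = None"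
  by (cases x) auto

fun compile :: "recf \<Rightarrow> nat \<Rightarrow> recf" where
  "compile Zero k = cn 1"
| "compile Succ k = (if k = 0 then Zero else SUC (SUC (Proj 1)))"
| "compile (Proj i) k = (if i < k then SUC (Proj (Suc i)) else Zero)"
| "compile (Comp f gs) k =
     MUL (SG (prodl (map (\<lambda>g. compile g k) gs)))
         (Comp (compile f (length gs)) (Proj 0 # map (\<lambda>g. PRED (compile g k)) gs))"
| "compile (Prim f g) k = (case k of 0 \<Rightarrow> Zero | Suc k' \<Rightarrow>
     Comp (Prim (compile f k')
             (MUL (SG (Proj 1)) (Comp (compile g (Suc (Suc k'))) (Proj 2 # Proj 0 # PRED (Proj 1) # projsFrom 3 k'))))
          (Proj 1 # Proj 0 # projsFrom 2 k'))"
| "compile (Mini f) k =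
     (let E = Comp (compile f (Suc k)) (Proj 1 # Proj 0 # projsFrom 2 k);
          good = SG (PRED E);
          hit = MUL (SG E) (NSG (PRED E));
          summand = MUL (SUC (Proj 0)) (MUL hit (bprod (Suc k) good))
      in Comp (bsum (Suc k) summand) (SUC (Proj 0) # Proj 0 # projsFrom 1 k))"

lemma ev_PRED': "rec_eval g xs a \<Longrightarrow> rec_eval (PRED g) xs (a - Suc 0)"
  using ev_PRED by simp

lemma hit_val: "(if enc x = 0 then 0 else 1) * (if enc x - 1 = 0 then 1 else 0) = (if x = Some 0 then 1 else (0::nat))"
  by (cases x) auto

lemma good_val: "(if enc x - 1 = 0 then 0 else 1) = (if \<exists>v. x = Some (Suc v) then 1 else (0::nat))"
  proof (cases x)
  case (Some y) then show ?thesis by (cases y) auto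
qed simp

lemma prod_ind: "(\<Prod>m<(j::nat). (if P m then 1 else 0::nat)) = (if \<forall>m<j. P m then 1 else 0)"
  by (induction j) (auto simp: less_Suc_eq)

lemma mini_sum:
  fixes h :: "nat \<Rightarrow> nat option"
  shows "(\<Sum>j<Suc t. Suc j * ((if enc (h j) = 0 then 0 else 1) * (if enc (h j) - 1 = 0 then 1 else 0)
           * (\<Prod>m<j. (if enc (h m) - 1 = 0 then 0 else 1))))
        = enc (if \<exists>n\<le>t. minP h n then Some (LEAST n. minP h n) else None)"
proof -
  have eq: "Suc j * ((if enc (h j) = 0 then 0 else 1) * (if enc (h j) - 1 = 0 then 1 else 0)
           * (\<Prod>m<j. (if enc (h m) - 1 = 0 then 0 else 1))) = (if minP h j then Suc j else 0)" for j
    unfolding hit_val good_val prod_ind minP_def by auto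
  show ?thesis
  proof (cases "\<exists>n\<le>t. minP h n")
    case True
    then obtain n where n: "n \<le> t" "minP h n" by blast
    have "(\<Sum>j<Suc t. (if minP h j then Suc j else 0)) = (\<Sum>j<Suc t. (if j = n then Suc n else 0))"
      by (rule sum.cong) (auto dest: minP_unique[OF _ n(2)] simp: n(2))
    also have "\<dots> = Suc n" using n(1) by simp
    finally show ?thesis unfolding eq using True minP_Least[OF n(2)] by simp
  next
    case False
    then have "(\<Sum>j<Suc t. (if minP h j then Suc j else 0)) = 0" by (auto intro!: sum.neutral)
    then show ?thesis unfolding eq using False by simp
  qed
qed

lemma prim_step:
  assumes G: "\<And>zs. length zs = Suc (Suc k') \<Longrightarrow> rec_eval (compile g (Suc (Suc k'))) (t # zs) (enc (clocked g t zs))"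
    and F: "rec_eval (compile f k') (t # ys) (enc (clocked f t ys))"
    and len: "length ys = k'"
  shows "rec_eval (Prim (compile f k')
             (MUL (SG (Proj 1)) (Comp (compile g (Suc (Suc k'))) (Proj 2 # Proj 0 # PRED (Proj 1) # projsFrom 3 k'))))
          (n # t # ys) (enc (prim_cl (clocked f t ys) (\<lambda>m r. clocked g t (m#r#ys)) n))"
proof (induction n)
  case 0 then show ?case using F by (auto intro: eval_Prim0)
next
  case (Suc n)
  let ?p = "prim_cl (clocked f t ys) (\<lambda>m r. clocked g t (m#r#ys)) n"
  let ?r = "enc ?p"
  have args: "list_all2 (\<lambda>g' v. rec_eval g' (n # ?r # t # ys) v) (Proj 2 # Proj 0 # PRED (Proj 1) # projsFrom 3 k')
      (t # n # (?r - 1) # ys)"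
  proof -
    have "list_all2 (\<lambda>g v. rec_eval g ([n, ?r, t] @ ys) v) (projsFrom 3 k') ys"
      by (rule ev_projsFrom) (use len in auto)
    then show ?thesis by (auto intro!: ev_Proj_nth ev_PRED')
  qed
  have c: "rec_eval (Comp (compile g (Suc (Suc k'))) (Proj 2 # Proj 0 # PRED (Proj 1) # projsFrom 3 k'))
       (n # ?r # t # ys) (enc (clocked g t (n # (?r - 1) # ys)))"
    by (rule eval_Comp[OF args]) (rule G, use len in simp)
  have m: "rec_eval (MUL (SG (Proj 1)) (Comp (compile g (Suc (Suc k'))) (Proj 2 # Proj 0 # PRED (Proj 1) # projsFrom 3 k')))
       (n # ?r # t # ys) ((if ?r = 0 then 0 else 1) * enc (clocked g t (n # (?r - 1) # ys)))"
    by (rule ev_MUL[OF ev_SG c]) (auto intro: ev_Proj_nth)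
  have "(if ?r = 0 then 0 else 1) * enc (clocked g t (n # (?r - 1) # ys)) =
        enc (prim_cl (clocked f t ys) (\<lambda>m r. clocked g t (m#r#ys)) (Suc n))"
    by (cases ?p) auto
  then show ?case using eval_PrimS[OF Suc m] by simp
qed

lemma compile_correct: "length xs = k \<Longrightarrow> rec_eval (compile f k) (t # xs) (enc (clocked f t xs))"
proof (induction f arbitrary: k xs)
  case Zero then show ?case using ev_cn[of 1] by simp
next
  case Succ then show ?case
    by (cases xs) (auto intro!: eval_Zero ev_SUC ev_Proj_nth)
next
  case (Proj i) then show ?case by (auto intro!: eval_Zero ev_SUC ev_Proj_nth)
next
  case (Comp f gs)
  let ?vs = "map (\<lambda>g. enc (clocked g t xs)) gs"
  have gs: "rec_eval (compile g k) (t # xs) (enc (clocked g t xs))" if "g \<in> set gs" for g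
    using Comp.IH(2)[OF that Comp.prems] .
  have a1: "list_all2 (\<lambda>g v. rec_eval g (t # xs) v) (map (\<lambda>g. compile g k) gs) ?vs"
    by (simp add: list_all2_map1 list_all2_map2 list_all2_same gs)
  have a2: "list_all2 (\<lambda>g v. rec_eval g (t # xs) v) (Proj 0 # map (\<lambda>g. PRED (compile g k)) gs)
       (t # map (\<lambda>g. enc (clocked g t xs) - 1) gs)"
    by (simp add: list_all2_map1 list_all2_map2 list_all2_same gs ev_PRED' ev_Proj_nth)
  have f: "rec_eval (Comp (compile f (length gs)) (Proj 0 # map (\<lambda>g. PRED (compile g k)) gs)) (t # xs)
      (enc (clocked f t (map (\<lambda>g. enc (clocked g t xs) - 1) gs)))"
    by (rule eval_Comp[OF a2]) (rule Comp.IH(1), simp)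
  have r: "rec_eval (compile (Comp f gs) k) (t # xs)
     ((if prod_list ?vs = 0 then 0 else 1) * enc (clocked f t (map (\<lambda>g. enc (clocked g t xs) - 1) gs)))"
    unfolding compile.simps by (rule ev_MUL[OF ev_SG[OF ev_prodl[OF a1]] f])
  show ?case
  proof (cases "None \<in> set (map (\<lambda>g. clocked g t xs) gs)")
    case True
    then obtain g where "g \<in> set gs" "clocked g t xs = None" by auto
    then have "prod_list ?vs = 0" by (auto simp: prod_list_zero_iff image_iff intro!: bexI[of _ g])
    then show ?thesis using r True by (simp add: Let_def)
  next
    case False
    then have "prod_list ?vs \<noteq> 0" by (auto simp: prod_list_zero_iff enc_0_iff) (metis image_eqI)
    moreover have eqm: "map (\<lambda>g. enc (clocked g t xs) - 1) gs = map the (map (\<lambda>g. clocked g t xs) gs)"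
      using False by (auto simp: enc_def split: option.splits) (metis image_eqI)
    moreover have "clocked (Comp f gs) t xs = clocked f t (map (\<lambda>g. enc (clocked g t xs) - 1) gs)"
      by (simp only: clocked.simps Let_def if_not_P[OF False] eqm)
    ultimately show ?thesis using r by simp
  qed
next
  case (Prim f g)
  show ?case
  proof (cases k)
    case 0 then show ?thesis using Prim.prems by (auto intro: eval_Zero)
  next
    case (Suc k')
    then obtain n ys where xs: "xs = n # ys" and len: "length ys = k'" using Prim.prems by (cases xs) auto
    have P: "rec_eval (Prim (compile f k')
             (MUL (SG (Proj 1)) (Comp (compile g (Suc (Suc k'))) (Proj 2 # Proj 0 # PRED (Proj 1) # projsFrom 3 k'))))
          (n # t # ys) (enc (prim_cl (clocked f t ys) (\<lambda>m r. clocked g t (m#r#ys)) n))"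
      by (rule prim_step) (auto intro: Prim.IH len)
    have args: "list_all2 (\<lambda>g' v. rec_eval g' (t # n # ys) v) (Proj 1 # Proj 0 # projsFrom 2 k') (n # t # ys)"
    proof -
      have "list_all2 (\<lambda>g v. rec_eval g ([t, n] @ ys) v) (projsFrom 2 k') ys"
        by (rule ev_projsFrom) (use len in auto)
      then show ?thesis by (auto intro!: ev_Proj_nth)
    qed
    show ?thesis unfolding Suc xs using eval_Comp[OF args P] by simp
  qed
next
  case (Mini f)
  let ?h = "\<lambda>j. clocked f t (j # xs)"
  define E where "E = Comp (compile f (Suc k)) (Proj 1 # Proj 0 # projsFrom 2 k)"
  have E: "rec_eval E (j # t # xs) (enc (?h j))" for j
  proof -
    have "list_all2 (\<lambda>g v. rec_eval g ([j, t] @ xs) v) (projsFrom 2 k) xs"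
      by (rule ev_projsFrom) (use Mini.prems in auto)
    then have args: "list_all2 (\<lambda>g' v. rec_eval g' (j # t # xs) v) (Proj 1 # Proj 0 # projsFrom 2 k) (t # j # xs)"
      by (auto intro!: ev_Proj_nth)
    show ?thesis unfolding E_def by (rule eval_Comp[OF args]) (rule Mini.IH, use Mini.prems in simp)
  qed
  define good where "good = SG (PRED E)"
  define hit where "hit = MUL (SG E) (NSG (PRED E))"
  define summand where "summand = MUL (SUC (Proj 0)) (MUL hit (bprod (Suc k) good))"
  have good: "rec_eval good (m # t # xs) (if enc (?h m) - 1 = 0 then 0 else 1)" for m
    unfolding good_def by (rule ev_SG[OF ev_PRED[OF E]])
  have hit: "rec_eval hit (j # t # xs) ((if enc (?h j) = 0 then 0 else 1) * (if enc (?h j) - 1 = 0 then 1 else 0))" for j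
    unfolding hit_def by (rule ev_MUL[OF ev_SG[OF E] ev_NSG[OF ev_PRED[OF E]]])
  have summand: "rec_eval summand (j # t # xs) (Suc j * ((if enc (?h j) = 0 then 0 else 1) * (if enc (?h j) - 1 = 0 then 1 else 0)
           * (\<Prod>m<j. (if enc (?h m) - 1 = 0 then 0 else 1))))" for j
    unfolding summand_def
    by (rule ev_MUL[OF ev_SUC[OF ev_Proj_nth] ev_MUL[OF hit ev_bprod[OF good]]]) (use Mini.prems in simp_all)
  have S: "rec_eval (bsum (Suc k) summand) (Suc t # t # xs) (enc (clocked (Mini f) t xs))"
    unfolding clocked.simps mini_sum[symmetric]
    by (rule ev_bsum[OF summand]) (use Mini.prems in simp)
  have args: "list_all2 (\<lambda>g' v. rec_eval g' (t # xs) v) (SUC (Proj 0) # Proj 0 # projsFrom 1 k) (Suc t # t # xs)"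
  proof -
    have "list_all2 (\<lambda>g v. rec_eval g ([t] @ xs) v) (projsFrom 1 k) xs"
      by (rule ev_projsFrom) (use Mini.prems in auto)
    then show ?thesis by (auto intro!: ev_Proj_nth ev_SUC)
  qed
  show ?case unfolding compile.simps Let_def E_def[symmetric] good_def[symmetric] hit_def[symmetric]
      summand_def[symmetric]
    by (rule eval_Comp[OF args S])
qed



definition cntf :: "recf \<Rightarrow> nat \<Rightarrow> nat \<Rightarrow> nat" where
  "cntf f t m = (\<Sum>i<m. if clocked f t [i] = None then 0 else 1)"

definition testf :: "recf \<Rightarrow> nat \<Rightarrow> nat \<Rightarrow> nat \<Rightarrow> nat \<Rightarrow> nat \<Rightarrow> nat" where
  "testf f N a b t m = (if N - m = 0 then 1 else 0) * (if a * m - b * cntf f t m = 0 then 0 else 1)"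

definition Sf :: "recf \<Rightarrow> nat \<Rightarrow> nat \<Rightarrow> nat \<Rightarrow> nat \<Rightarrow> nat" where
  "Sf f N a b m = (LEAST t. testf f N a b t m = 0)"

definition Tf :: "recf \<Rightarrow> nat \<Rightarrow> nat \<Rightarrow> nat \<Rightarrow> nat \<Rightarrow> nat \<Rightarrow> nat" where
  "Tf f N a b K n = (\<Sum>m<Suc (K * n). Sf f N a b m)"

lemma ev_C: "rec_eval (SG (compile f 1)) [t, n] (if clocked f t [n] = None then 0 else 1)"
  using ev_SG[OF compile_correct[of "[n]" 1 f t]] by (simp add: enc_0_iff)

lemma ev_CNT: "rec_eval (Comp (bsum 1 (Comp (SG (compile f 1)) [Proj 1, Proj 0])) [Proj 1, Proj 0]) [t, m] (cntf f t m)"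
proof -
  have h: "rec_eval (Comp (SG (compile f 1)) [Proj 1, Proj 0]) [i, t] (if clocked f t [i] = None then 0 else 1)" for i
    by (rule comp2[OF _ _ ev_C]) (auto intro: ev_Proj_nth)
  have "rec_eval (bsum 1 (Comp (SG (compile f 1)) [Proj 1, Proj 0])) [m, t] (cntf f t m)"
    unfolding cntf_def by (rule ev_bsum[OF h]) simp
  then show ?thesis by (rule comp2[rotated 2]) (auto intro: ev_Proj_nth)
qed

definition "TESTP f N a b = MUL (NSG (SUB (cn N) (Proj 1)))
   (SG (SUB (MUL (cn a) (Proj 1)) (MUL (cn b) (Comp (bsum 1 (Comp (SG (compile f 1)) [Proj 1, Proj 0])) [Proj 1, Proj 0]))))"

lemma ev_TEST: "rec_eval (TESTP f N a b) [t, m] (testf f N a b t m)"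
  unfolding TESTP_def testf_def
  by (intro ev_MUL ev_NSG ev_SG ev_SUB ev_cn ev_CNT ev_Proj_nth) auto

lemma ev_SP:
  assumes ex: "\<exists>t. testf f N a b t m = 0"
  shows "rec_eval (Mini (TESTP f N a b)) [m] (Sf f N a b m)"
proof (rule eval_Mini)
  show "rec_eval (TESTP f N a b) [Sf f N a b m, m] 0"
    using ev_TEST[of f N a b "Sf f N a b m" m] ex unfolding Sf_def by (metis (mono_tags) LeastI)
  show "\<forall>j<Sf f N a b m. \<exists>v>0. rec_eval (TESTP f N a b) [j, m] v"
    using ev_TEST not_less_Least unfolding Sf_def by blast
qed

definition "BPROG f N a b K = Comp (SG (compile f 1))
   [Comp (bsum 0 (Mini (TESTP f N a b))) [SUC (MUL (cn K) (Proj 0))], Proj 0]"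

lemma computable_B:
  assumes ex: "\<forall>m. \<exists>t. testf f N a b t m = 0"
  shows "computable_set {n. clocked f (Tf f N a b K n) [n] \<noteq> None}"
  unfolding computable_set_def
proof (intro exI allI)
  fix n
  have T: "rec_eval (Comp (bsum 0 (Mini (TESTP f N a b))) [SUC (MUL (cn K) (Proj 0))]) [n] (Tf f N a b K n)"
    unfolding Tf_def
    by (rule comp1[OF ev_SUC[OF ev_MUL[OF ev_cn ev_Proj_nth]]], simp, simp, rule ev_bsum) (auto intro: ev_SP[OF spec[OF ex]])
  show "rec_eval (BPROG f N a b K) [n] (if n \<in> {n. clocked f (Tf f N a b K n) [n] \<noteq> None} then 1 else 0)"
    unfolding BPROG_def using comp2[OF T ev_Proj_nth[of 0 "[n]" n] ev_C[of f]] by (cases "clocked f (Tf f N a b K n) [n]") auto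
qed

lemma cntf_card: "cntf f t m = card {i. i < m \<and> clocked f t [i] \<noteq> None}"
proof -
  have "cntf f t m = (\<Sum>i<m. if clocked f t [i] \<noteq> None then 1 else 0)"
    unfolding cntf_def by (rule sum.cong) auto
  also have "\<dots> = sum (\<lambda>_. 1) {i\<in>{..<m}. clocked f t [i] \<noteq> None}"
    by (rule sum.inter_filter[symmetric]) simp
  also have "\<dots> = card {i. i < m \<and> clocked f t [i] \<noteq> None}" by simp
  finally show ?thesis .
qed

lemma testf_0: "testf f N a b t m = 0 \<longleftrightarrow> m < N \<or> a * m \<le> b * cntf f t m"
  unfolding testf_def by auto

lemma As_mono: "clocked f t xs \<noteq> None \<Longrightarrow> t \<le> t' \<Longrightarrow> clocked f t' xs \<noteq> None"
  using clocked_mono by (metis not_None_eq)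

lemma finite_stage:
  "\<exists>t. \<forall>i<m. (\<exists>t'. clocked f t' [i] \<noteq> None) \<longrightarrow> clocked f t [i] \<noteq> None"
proof (induction m)
  case 0 then show ?case by simp
next
  case (Suc m)
  then obtain t where t: "\<forall>i<m. (\<exists>t'. clocked f t' [i] \<noteq> None) \<longrightarrow> clocked f t [i] \<noteq> None" by blast
  show ?case
  proof (cases "\<exists>t'. clocked f t' [m] \<noteq> None")
    case True
    then obtain t1 where t1: "clocked f t1 [m] \<noteq> None" by blast
    show ?thesis
    proof (intro exI[of _ "max t t1"] allI impI)
      fix i assume i: "i < Suc m" "\<exists>t'. clocked f t' [i] \<noteq> None"
      show "clocked f (max t t1) [i] \<noteq> None"
      proof (cases "i < m")
        case True then show ?thesis using t i As_mono[of f t "[i]" "max t t1"] by auto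
      next
        case False then have "i = m" using i by simp
        then show ?thesis using t1 As_mono[of f t1 "[m]" "max t t1"] by auto
      qed
    qed
  next
    case False
    then show ?thesis using t by (metis less_Suc_eq)
  qed
qed

lemma Sf_le_Tf: "m < Suc (K * i) \<Longrightarrow> Sf f N a b m \<le> Tf f N a b K i"
  unfolding Tf_def by (rule member_le_sum) auto

lemma density_bound:
  assumes K: "K > 0" and Nm: "N \<le> m" and ex: "\<forall>m. \<exists>t. testf f N a b t m = 0"
  shows "a * m \<le> b * (card ({n. clocked f (Tf f N a b K n) [n] \<noteq> None} \<inter> {0..<m}) + (m div K + 1))"
proof -
  let ?B = "{n. clocked f (Tf f N a b K n) [n] \<noteq> None}"
  define s where "s = Sf f N a b m"
  have "testf f N a b s m = 0" unfolding s_def Sf_def using ex by (meson LeastI_ex)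
  then have 1: "a * m \<le> b * cntf f s m" using Nm testf_0 by auto
  let ?X = "{i. i < m \<and> clocked f s [i] \<noteq> None}"
  have sub: "?X \<subseteq> (?B \<inter> {0..<m}) \<union> {..m div K}"
  proof
    fix i assume i: "i \<in> ?X"
    show "i \<in> (?B \<inter> {0..<m}) \<union> {..m div K}"
    proof (cases "i \<le> m div K")
      case True then show ?thesis by simp
    next
      case False
      then have "m < i * K" using less_eq_div_iff_mult_less_eq[OF K] by (simp add: not_le)
      then have "m < Suc (K * i)" by (simp add: mult.commute)
      then have "s \<le> Tf f N a b K i" unfolding s_def by (rule Sf_le_Tf)
      then have "clocked f (Tf f N a b K i) [i] \<noteq> None" using i As_mono by blast
      then show ?thesis using i by auto
    qed
  qed
  have "cntf f s m = card ?X" by (rule cntf_card)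
  also have "\<dots> \<le> card ((?B \<inter> {0..<m}) \<union> {..m div K})" by (rule card_mono[OF _ sub]) auto
  also have "\<dots> \<le> card (?B \<inter> {0..<m}) + card {..m div K}" by (rule card_Un_le)
  also have "\<dots> = card (?B \<inter> {0..<m}) + (m div K + 1)" by simp
  finally show ?thesis using 1 by (meson le_trans mult_le_mono2)
qed

lemma real_step:
  fixes a b m cB K :: nat and r e :: real
  assumes ineq: "a * m \<le> b * (cB + (m div K + 1))" and b: "b > 0" and r: "r = real a / real b"
    and K: "1 / real K < e" "K > 0" and m: "1 / real m < e" "m > 0"
  shows "r - 2 * e \<le> real cB / real m"
proof -
  have "real a * real m \<le> real b * (real cB + real (m div K) + 1)"
    using ineq by (metis of_nat_le_iff of_nat_mult of_nat_add of_nat_1 add.assoc)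
  moreover have "real (m div K) \<le> real m / real K" by (rule of_nat_div_le_of_nat)
  ultimately have "real a * real m \<le> real b * (real cB + real m / real K + 1)"
    by (smt (verit, best) b mult_left_mono of_nat_0_le_iff)
  moreover have "real a * real m = real b * (r * real m)" using b r by simp
  ultimately have "real b * (r * real m) \<le> real b * (real cB + real m / real K + 1)" by simp
  then have "r * real m \<le> real cB + real m / real K + 1"
    using b by (simp add: mult_le_cancel_left_pos)
  then have "r \<le> real cB / real m + 1 / real K + 1 / real m"
    using m by (simp add: field_simps)
  then show ?thesis using K m by linarith
qed

lemma rho_empty: "lower_density {} = 0"
  unfolding lower_density_def rho_def by (simp add: Liminf_const zero_ereal_def)

lemma computable_empty: "computable_set {}"
  unfolding computable_set_def by (auto intro!: exI[of _ Zero] eval_Zero)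

lemma lower_density_le1: "lower_density S \<le> 1"
proof -
  have "lower_density S \<le> limsup (\<lambda>n. ereal (rho (Suc n) S))"
    unfolding lower_density_def by (rule Liminf_le_Limsup) simp
  also have "\<dots> \<le> 1"
  proof (rule Limsup_bounded, rule always_eventually, intro allI)
    fix n
    have "card (S \<inter> {0..<Suc n}) \<le> card {0..<Suc n}" by (rule card_mono) auto
    then have "rho (Suc n) S \<le> 1" unfolding rho_def by simp
    then show "ereal (rho (Suc n) S) \<le> 1" by simp
  qed
  finally show ?thesis .
qed

theorem mainTheorem7:
  fixes A :: "nat set" and \<epsilon> :: real
  assumes "ce_set A" and "\<epsilon> > 0"
  shows "\<exists>B. B \<subseteq> A \<and> computable_set B \<and> lower_density B > lower_density A - ereal \<epsilon>"
proof -
  obtain f where fA: "\<And>n. n \<in> A \<longleftrightarrow> (\<exists>y. rec_eval f [n] y)" using assms(1) unfolding ce_set_def by blast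
  have Aiff: "n \<in> A \<longleftrightarrow> (\<exists>t. clocked f t [n] \<noteq> None)" for n
    using fA clocked_iff by (metis not_None_eq)
  show ?thesis
  proof (cases "lower_density A < ereal \<epsilon>")
    case True
    have "lower_density A - ereal \<epsilon> < 0"
      using True by (cases "lower_density A") auto
    then show ?thesis using rho_empty computable_empty by (intro exI[of _ "{}"]) auto
  next
    case False
    then have ge: "ereal \<epsilon> \<le> lower_density A" by simp
    obtain d where d: "lower_density A = ereal d"
      using ge lower_density_le1[of A] by (cases "lower_density A") auto
    have de: "\<epsilon> \<le> d" using ge d by simp
    obtain r where rQ: "r \<in> \<rat>" and r1: "d - \<epsilon>/3 < r" and r2: "r < d"
      using Rats_dense_in_real[of "d - \<epsilon>/3" d] assms(2) by auto
    have rpos: "r > 0" using r1 de assms(2) by linarith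
    obtain a' b' :: int where b'0: "b' > 0" and rab': "r = of_int a' / of_int b'"
      using Rats_cases'[OF rQ] by metis
    have a'0: "a' > 0"
    proof (rule ccontr)
      assume "\<not> a' > 0"
      then have "real_of_int a' \<le> 0" by simp
      then have "r \<le> 0" using rab' b'0 by (simp add: divide_nonpos_pos)
      then show False using rpos by simp
    qed
    define a where "a = nat a'"
    define b where "b = nat b'"
    have b0: "b > 0" using b'0 b_def by simp
    have rab: "r = real a / real b" using rab' a'0 b'0 a_def b_def by simp
    have "ereal r < lower_density A" using d r2 by simp
    then have "eventually (\<lambda>n. ereal r < ereal (rho (Suc n) A)) sequentially"
      unfolding lower_density_def by (rule less_LiminfD)
    then obtain N0 where N0: "\<And>n. n \<ge> N0 \<Longrightarrow> r < rho (Suc n) A"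
      unfolding eventually_sequentially by auto
    define N where "N = Suc N0"
    have Adense: "a * m \<le> b * card (A \<inter> {0..<m})" if Nm: "N \<le> m" for m
    proof -
      obtain n where n: "m = Suc n" "n \<ge> N0" using Nm N_def by (cases m) auto
      have "r < real (card (A \<inter> {0..<m})) / real m" using N0[OF n(2)] n(1) unfolding rho_def by simp
      then have "r * real m < real (card (A \<inter> {0..<m}))" using n(1) by (simp add: field_simps)
      then have "real a * real m < real b * real (card (A \<inter> {0..<m}))"
        using rab b0 by (simp add: field_simps)
      then have "real (a * m) < real (b * card (A \<inter> {0..<m}))" by simp
      then show ?thesis by linarith
    qed
    have ex: "\<forall>m. \<exists>t. testf f N a b t m = 0"
    proof
      fix m
      show "\<exists>t. testf f N a b t m = 0"
      proof (cases "m < N")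
        case True then show ?thesis using testf_0 by blast
      next
        case False
        obtain t where t: "\<forall>i<m. (\<exists>t'. clocked f t' [i] \<noteq> None) \<longrightarrow> clocked f t [i] \<noteq> None"
          using finite_stage by blast
        have "{i. i < m \<and> clocked f t [i] \<noteq> None} = A \<inter> {0..<m}"
          using t Aiff by auto
        then have "cntf f t m = card (A \<inter> {0..<m})" by (simp add: cntf_card)
        then have "testf f N a b t m = 0" using Adense[of m] False testf_0 by auto
        then show ?thesis by blast
      qed
    qed
    obtain K :: nat where K: "3 / \<epsilon> < real K" using reals_Archimedean2 by blast
    obtain M :: nat where M: "3 / \<epsilon> < real M" using reals_Archimedean2 by blast
    have K0: "K > 0" using K assms(2) by (metis divide_pos_pos gr0I of_nat_0 order_less_asym zero_less_numeral)
    have Kb: "1 / real K < \<epsilon> / 3" using K K0 assms(2) by (simp add: field_simps)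
    define B where "B = {n. clocked f (Tf f N a b K n) [n] \<noteq> None}"
    have BA: "B \<subseteq> A" unfolding B_def using Aiff by auto
    have Bc: "computable_set B" unfolding B_def by (rule computable_B[OF ex])
    have ev: "eventually (\<lambda>n. ereal (r - 2 * (\<epsilon>/3)) \<le> ereal (rho (Suc n) B)) sequentially"
      unfolding eventually_sequentially
    proof (intro exI[of _ "max N M"] allI impI)
      fix n assume n: "max N M \<le> n"
      have ineq: "a * Suc n \<le> b * (card (B \<inter> {0..<Suc n}) + (Suc n div K + 1))"
        unfolding B_def by (rule density_bound[OF K0 _ ex]) (use n in auto)
      have mb: "1 / real (Suc n) < \<epsilon> / 3"
      proof -
        have "3 / \<epsilon> < real (Suc n)" using M n by linarith
        then show ?thesis using assms(2) by (simp add: field_simps)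
      qed
      have "r - 2 * (\<epsilon>/3) \<le> real (card (B \<inter> {0..<Suc n})) / real (Suc n)"
        by (rule real_step[OF ineq b0 rab Kb K0 mb]) simp
      then show "ereal (r - 2 * (\<epsilon>/3)) \<le> ereal (rho (Suc n) B)" unfolding rho_def by simp
    qed
    have "ereal (r - 2 * (\<epsilon>/3)) \<le> lower_density B"
      unfolding lower_density_def by (rule Liminf_bounded[OF ev])
    moreover have "lower_density A - ereal \<epsilon> < ereal (r - 2 * (\<epsilon>/3))"
      using d r1 by simp
    ultimately show ?thesis using BA Bc by (intro exI[of _ B]) auto
  qed
qed


end
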